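(* Let $n>(p+s)^4$ be an integer. Then $\rho_1 := \sum_{k=1}^{n} r_{1,k}=0$.
   Context: Let $p\geqslant 5$ be a prime and $s$ a positive integer. Write $v_p$ for the $p$-adic valuation and $(\alpha)_k=\alpha(\alpha+1)\cdots(\alpha+k-1)$. Put $N_0=v_p(p-1+s)$ and $M_0=p^{2+N_0}s-1$. For an integer $n>(p+s)^4$ let \[R_n(t)=p^{pn}\, n!^s\, t^{M_0}\,\frac{\prod_{j=1}^{p-1}(t+\frac{j}{p})_n}{(t)_{n+1}^{p-1+s}}\in\mathbb{Q}(t),\] with partial fraction decomposition $R_n(t)=\sum_{i=1}^{p-1+s}\sum_{k=1}^{n} r_{i,k}(t+k)^{-i}$, $r_{i,k}\in\mathbb{Q}$. *)

theory Defs
  imports Complex_Main "HOL-Computational_Algebra.Primes"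
begin

definition N0 :: "nat \<Rightarrow> nat \<Rightarrow> nat" where
  "N0 p s = multiplicity p (p - 1 + s)"

definition M0 :: "nat \<Rightarrow> nat \<Rightarrow> nat" where
  "M0 p s = p ^ (2 + N0 p s) * s - 1"

definition Rfun :: "nat \<Rightarrow> nat \<Rightarrow> nat \<Rightarrow> rat \<Rightarrow> rat" where
  "Rfun p s n t =
     of_nat p ^ (p * n) * (fact n) ^ s * t ^ (M0 p s) *
     (\<Prod>j=1..p-1. pochhammer (t + of_nat j / of_nat p) n) /
     (pochhammer t (n + 1)) ^ (p - 1 + s)"

end

theory Submission
  imports Defs
begin

lemma of_rat_prod': "of_rat (prod f A) = (\<Prod>x\<in>A. (of_rat (f x) :: real))"
  by (induction A rule: infinite_finite_induct) (auto simp: of_rat_mult)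

lemma of_rat_fact': "(of_rat (fact n) :: real) = fact n"
  by (metis of_nat_fact of_rat_of_nat_eq)

lemma prod_factor:
  fixes x :: real assumes "x > 0"
  shows "(\<Prod>i<n. x + (c + real i)) = x ^ n * (\<Prod>i<n. 1 + (c + real i) / x)"
proof -
  have "x ^ n * (\<Prod>i<n. 1 + (c + real i) / x) = (\<Prod>i<n. x * (1 + (c + real i) / x))"
    by (simp add: prod.distrib)
  also have "\<dots> = (\<Prod>i<n. x + (c + real i))"
    using assms by (intro prod.cong) (auto simp: field_simps)
  finally show ?thesis by simp
qed

lemma lim_ratio: "(\<lambda>m. real m / (real m + c)) \<longlonglongrightarrow> 1"
proof -
  have "(\<lambda>m. 1 / (1 + c / real m)) \<longlonglongrightarrow> 1 / (1 + 0)"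
    by (intro tendsto_intros lim_const_over_n) auto
  moreover have "eventually (\<lambda>m. 1 / (1 + c / real m) = real m / (real m + c)) sequentially"
    using eventually_gt_at_top[of 0]
  proof eventually_elim
    case (elim m)
    then have "1 + c / real m = (real m + c) / real m" by (simp add: field_simps)
    then show ?case by simp
  qed
  ultimately show ?thesis by (simp add: Lim_transform_eventually)
qed

lemma lim_inv: "(\<lambda>m. 1 / (real m + real k)) \<longlonglongrightarrow> 0"
proof -
  have "(\<lambda>m. (1 / real m) * (real m / (real m + real k))) \<longlonglongrightarrow> 0 * 1"
    by (intro tendsto_intros lim_inverse_n' lim_ratio)
  moreover have "eventually (\<lambda>m. (1 / real m) * (real m / (real m + real k)) = 1 / (real m + real k)) sequentially"
    using eventually_gt_at_top[of 0] by eventually_elim auto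
  ultimately show ?thesis by (simp add: Lim_transform_eventually)
qed

theorem lemma4p1:
  fixes p s n :: nat and r :: "nat \<Rightarrow> nat \<Rightarrow> rat"
  assumes "prime p" and "p \<ge> 5" and "s > 0"
    and "n > (p + s) ^ 4"
    and pfd: "\<And>t::rat. (\<forall>k\<in>{0..n}. t \<noteq> - of_nat k) \<Longrightarrow>
        Rfun p s n t = (\<Sum>i=1..p-1+s. \<Sum>k=1..n. r i k / (t + of_nat k) ^ i)"
  shows "(\<Sum>k=1..n. r 1 k) = 0"
proof -
  define q where "q = p - 1 + s"
  define K where "K = real p ^ (p*n) * fact n ^ s"
  define A where "A = (\<lambda>m::nat. \<Prod>j=1..p-1. \<Prod>i<n. (1 + (real j / real p + real i)/real m))"
  define B where "B = (\<lambda>m::nat. \<Prod>i<n+1. (1 + (0 + real i) / real m))"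
  have pN: "p ^ N0 p s \<le> p - 1 + s"
    unfolding N0_def using assms(2,3) by (intro dvd_imp_le multiplicity_dvd) auto
  have "M0 p s \<le> p ^ (2 + N0 p s) * s" unfolding M0_def by simp
  also have "\<dots> = p^2 * p ^ N0 p s * s" by (metis power_add)
  also have "\<dots> \<le> p^2 * (p - 1 + s) * s" using pN by (intro mult_mono) auto
  also have "\<dots> \<le> (p+s)^2 * (p + s) * (p + s)"
    by (intro mult_mono power_mono) auto
  also have "\<dots> = (p+s)^4" by (simp add: power_numeral_reduce)
  also have "\<dots> < n" by fact
  also have "n \<le> n * s" using assms(3) by simp
  finally have M0lt: "M0 p s < n * s" .
  have qge: "q \<ge> 2" unfolding q_def using assms(2) by simp
  have "(n+1)*q = n*(p-1) + n*s + q" unfolding q_def using assms(2)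
    by (cases p) (auto simp: algebra_simps)
  then have "M0 p s + 1 + n*(p-1) < (n+1)*q"
    using M0lt qge by linarith
  then obtain e where e: "(n+1)*q = M0 p s + 1 + n*(p-1) + e" "e > 0"
    by (metis add_diff_inverse_nat less_imp_le not_less zero_less_diff diff_add_inverse
        less_diff_conv add.commute)
  have eqX: "real_of_rat (of_nat m * Rfun p s n (of_nat m)) = K * A m / B m ^ q * (1 / real m) ^ e"
    if m: "m > 0" for m
  proof -
    define x where "x = real m"
    have x: "x > 0" using m unfolding x_def by simp
    have s1: "real_of_rat (of_nat m * Rfun p s n (of_nat m)) =
      x * (K * x ^ M0 p s * (\<Prod>j=1..p-1. \<Prod>i<n. x + (real j / real p + real i)) /
        (\<Prod>i<n+1. x + (0 + real i)) ^ q)"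
      unfolding Rfun_def pochhammer_prod x_def K_def q_def
      by (simp add: of_rat_mult of_rat_divide of_rat_power of_rat_prod' of_rat_fact' of_rat_add
          atLeast0LessThan add.assoc)
    have s2: "(\<Prod>j=1..p-1. \<Prod>i<n. x + (real j / real p + real i)) = x ^ (n*(p-1)) * A m"
    proof -
      have "(\<Prod>j=1..p-1. \<Prod>i<n. x + (real j / real p + real i)) =
          (\<Prod>j=1..p-1. x ^ n * (\<Prod>i<n. 1 + (real j / real p + real i) / x))"
        using x by (intro prod.cong refl prod_factor)
      also have "\<dots> = x ^ (n*(p-1)) * A m"
        unfolding A_def x_def by (simp add: prod.distrib power_mult mult.commute)
      finally show ?thesis .
    qed
    have s3: "(\<Prod>i<n+1. x + (0 + real i)) = x ^ (n+1) * B m"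
      unfolding B_def x_def using x x_def by (intro prod_factor) auto
    have Bpos: "B m > 0" unfolding B_def using m by (intro prod_pos) (auto intro: add_pos_nonneg)
    have pw: "(x ^ (n+1) * B m) ^ q = x ^ (M0 p s + 1 + n*(p-1)) * x ^ e * B m ^ q"
    proof -
      have "(x ^ (n+1) * B m) ^ q = x ^ ((n+1)*q) * B m ^ q"
        by (simp only: power_mult_distrib power_mult)
      also have "x ^ ((n+1)*q) = x ^ (M0 p s + 1 + n*(p-1)) * x ^ e"
        unfolding e(1) by (rule power_add)
      finally show ?thesis .
    qed
    have "real_of_rat (of_nat m * Rfun p s n (of_nat m)) =
        x * (K * x ^ M0 p s * (x ^ (n*(p-1)) * A m)) / (x ^ (M0 p s + 1 + n*(p-1)) * x ^ e * B m ^ q)"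
      using s1 s2 s3 pw by simp
    also have "\<dots> = K * A m / B m ^ q * (1 / x) ^ e"
      using x Bpos by (simp add: field_simps power_add)
    finally show ?thesis unfolding x_def .
  qed
  have "(\<lambda>m. K * A m / B m ^ q * (1 / real m) ^ e) \<longlonglongrightarrow>
      K * (\<Prod>j=1..p-1. \<Prod>i<n. (1 + 0)) / (\<Prod>i<n+1. (1 + 0)) ^ q * 0 ^ e"
    unfolding A_def B_def by (intro tendsto_intros lim_const_over_n lim_inverse_n') simp
  then have limX: "(\<lambda>m. K * A m / B m ^ q * (1 / real m) ^ e) \<longlonglongrightarrow> 0"
    using e(2) by (simp add: zero_power)
  define Y where "Y = (\<lambda>m. \<Sum>i=1..q. \<Sum>k=1..n. real_of_rat (r i k) *
      (real m / (real m + real k) * (1 / (real m + real k)) ^ (i - 1)))"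
  have eqY: "real_of_rat (of_nat m * (\<Sum>i=1..p-1+s. \<Sum>k=1..n. r i k / (of_nat m + of_nat k) ^ i)) = Y m"
    if m: "m > 0" for m
    unfolding Y_def q_def of_rat_mult of_rat_sum sum_distrib_left
  proof (intro sum.cong refl)
    fix i k assume i: "i \<in> {1..p-1+s}"
    then obtain i' where i': "i = Suc i'" by (cases i) auto
    show "real_of_rat (of_nat m) * real_of_rat (r i k / (of_nat m + of_nat k) ^ i) =
        real_of_rat (r i k) * (real m / (real m + real k) * (1 / (real m + real k)) ^ (i - 1))"
      unfolding i' using m
      apply (simp only: of_rat_divide of_rat_power of_rat_add of_rat_mult of_rat_of_nat_eq)
      by (simp add: field_simps)
  qed
  have "Y \<longlonglongrightarrow> (\<Sum>i=1..q. \<Sum>k=1..n. real_of_rat (r i k) * (1 * 0 ^ (i - 1)))"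
    unfolding Y_def by (intro tendsto_intros lim_ratio lim_inv)
  also have "(\<Sum>i=1..q. \<Sum>k=1..n. real_of_rat (r i k) * (1 * 0 ^ (i - 1))) =
      (\<Sum>i=1..q. if i = 1 then (\<Sum>k=1..n. real_of_rat (r 1 k)) else 0)"
    by (intro sum.cong refl) (auto simp: zero_power)
  also have "\<dots> = (\<Sum>k=1..n. real_of_rat (r 1 k))"
    using qge by (simp add: sum.delta)
  finally have limY: "Y \<longlonglongrightarrow> real_of_rat (\<Sum>k=1..n. r 1 k)" by (simp add: of_rat_sum)
  have ev: "eventually (\<lambda>m. K * A m / B m ^ q * (1 / real m) ^ e = Y m) sequentially"
    using eventually_gt_at_top[of 0]
  proof eventually_elim
    case (elim m)
    have "\<forall>k\<in>{0..n}. (of_nat m :: rat) \<noteq> - of_nat k" using elim by auto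
    from pfd[OF this] have "of_nat m * Rfun p s n (of_nat m) = of_nat m *
        (\<Sum>i=1..p-1+s. \<Sum>k=1..n. r i k / (of_nat m + of_nat k) ^ i)" by simp
    then show ?case using eqX[OF elim] eqY[OF elim] by metis
  qed
  have "Y \<longlonglongrightarrow> 0" using Lim_transform_eventually[OF limX ev] .
  with limY have "real_of_rat (\<Sum>k=1..n. r 1 k) = 0" using LIMSEQ_unique by blast
  then show ?thesis by simp
qed

end
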